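(* In the quantized ARX setting described in the context, suppose Assumptions (A1)–(A4) and (A6) hold, and let $0\le q\le q_0$. Write the least squares estimate $\theta_n(p^*,q)=[-a_{1n}(q),\dots,-a_{p^*n}(q),b_{1n}(q),\dots,b_{qn}(q)]^\top$, define $$\hat\theta_n(q)=[-a_{1n}(q),\dots,-a_{p^*n}(q),b_{1n}(q),\dots,b_{qn}(q),\underbrace{0,\dots,0}_{q_0-q}]^\top$$ and $\tilde\theta_n(q)=\bar\theta(p^*,q_0)-\hat\theta_n(q)$. Then there is a constant $\gamma'$ such that, almost surely, $\|\tilde\theta_n(q)\|\le\gamma'$ for all sufficiently large $n$.
   Context: System: $y_{n+1}=-a_1y_n-\dots-a_{p_0}y_{n-p_0+1}+b_1u_n+\dots+b_{q_0}u_{n-q_0+1}+w_{n+1}$, $n\ge0$, i.e. $A(z)y_{n+1}=B(z)u_n+w_{n+1}$ with $A(z)=1+a_1z+\dots+a_{p_0}z^{p_0}$ ($p_0\ge0$), $B(z)=b_1+\dots+b_{q_0}z^{q_0-1}$ ($q_0\ge1$), $z$ the backward shift, $a_{p_0}\ne0$, $b_{q_0}\ne0$. Noise $\{w_n\}$ i.i.d. $N(0,1)$; $y_n=u_n=w_n=0$ for $n<0$. With quantization step $\varepsilon>0$, $s_n=\varepsilon\lfloor y_n/\varepsilon+1/2\rfloor$. For integers $p,q\ge0$, $\psi_i(p,q)=[s_i,\dots,s_{i-p+1},u_i,\dots,u_{i-q+1}]^\top$ with $s_i=u_i=0$ when $i\le0$; $P_{n}(p,q)=(I+\sum_{i=0}^{n-1}\psi_i(p,q)\psi_i(p,q)^\top)^{-1}$;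 $\lambda^{(p,q)}_{min}(n)$ is the smallest eigenvalue of $P_{n+1}^{-1}(p,q)$. Least squares estimate $\theta_n(p,q)=P_n(p,q)\sum_{i=0}^{n-1}\psi_i(p,q)s_{i+1}$. $\bar\theta(p,q)=[-a_1,\dots,-a_p,b_1,\dots,b_q]^\top$ with $a_i=0$ for $i>p_0$, $b_j=0$ for $j>q_0$. Assumptions: (A1) $\{u_i\}$ i.i.d., uniform on $[-\delta,\delta]$, $\delta>0$. (A2) $A(z)\ne0$ for all $|z|\le1$. (A3) There is $c>0$ with $|a_i|\le c$, $|b_j|\le c$ for all $i,j$, and $\varepsilon<\frac{1}{2(1+p_0c)}$. (A4) $(p_0,q_0)\in\{(p,q):0\le p\le p^*,1\le q\le q^*\}$ for known integers $p^*,q^*>0$. (A6) There is $c_2>0$ such that for all $0\le q\le q^*$, almost surely $\lambda^{(p^*,q)}_{min}(n)\ge c_2(n+1)$ for all sufficiently large $n$. *)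

theory Defs
  imports "HOL-Probability.Probability" "Jordan_Normal_Form.Gauss_Jordan_Elimination"
    "Jordan_Normal_Form.Char_Poly"
begin

definition zneg :: "(nat \<Rightarrow> real) \<Rightarrow> int \<Rightarrow> real" where
  "zneg f i = (if i < 0 then 0 else f (nat i))"

text \<open>Sequence extended by zero to indices i <= 0 (convention s_i = u_i = 0 for i <= 0 in psi).\<close>
definition zle :: "(nat \<Rightarrow> real) \<Rightarrow> int \<Rightarrow> real" where
  "zle f i = (if i \<le> 0 then 0 else f (nat i))"

definition quant :: "real \<Rightarrow> real \<Rightarrow> real" where
  "quant \<epsilon> x = \<epsilon> * of_int \<lfloor>x / \<epsilon> + 1/2\<rfloor>"

definition psi :: "(nat \<Rightarrow> real) \<Rightarrow> (nat \<Rightarrow> real) \<Rightarrow> nat \<Rightarrow> nat \<Rightarrow> nat \<Rightarrow> real vec" where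
  "psi s u p q i = vec (p + q) (\<lambda>k. if k < p then zle s (int i - int k)
                                   else zle u (int i - int (k - p)))"

definition Pinv :: "(nat \<Rightarrow> real) \<Rightarrow> (nat \<Rightarrow> real) \<Rightarrow> nat \<Rightarrow> nat \<Rightarrow> nat \<Rightarrow> real mat" where
  "Pinv s u p q n = 1\<^sub>m (p + q) +
     mat (p + q) (p + q) (\<lambda>(j, k). \<Sum>i<n. vec_index (psi s u p q i) j * vec_index (psi s u p q i) k)"

definition Pmat :: "(nat \<Rightarrow> real) \<Rightarrow> (nat \<Rightarrow> real) \<Rightarrow> nat \<Rightarrow> nat \<Rightarrow> nat \<Rightarrow> real mat" where
  "Pmat s u p q n = the (mat_inverse (Pinv s u p q n))"

definition lam_min :: "(nat \<Rightarrow> real) \<Rightarrow> (nat \<Rightarrow> real) \<Rightarrow> nat \<Rightarrow> nat \<Rightarrow> nat \<Rightarrow> real" where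
  "lam_min s u p q n = Min {k. eigenvalue (Pinv s u p q (n + 1)) k}"

definition theta :: "(nat \<Rightarrow> real) \<Rightarrow> (nat \<Rightarrow> real) \<Rightarrow> nat \<Rightarrow> nat \<Rightarrow> nat \<Rightarrow> real vec" where
  "theta s u p q n = Pmat s u p q n *\<^sub>v
     vec (p + q) (\<lambda>j. \<Sum>i<n. vec_index (psi s u p q i) j * s (i + 1))"

definition theta_bar :: "(nat \<Rightarrow> real) \<Rightarrow> (nat \<Rightarrow> real) \<Rightarrow> nat \<Rightarrow> nat \<Rightarrow> nat \<Rightarrow> nat \<Rightarrow> real vec" where
  "theta_bar a b p0 q0 p q = vec (p + q) (\<lambda>k. if k < p then (if k + 1 \<le> p0 then - a (k + 1) else 0)
                                          else (if k - p + 1 \<le> q0 then b (k - p + 1) else 0))"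

definition theta_hat :: "(nat \<Rightarrow> real) \<Rightarrow> (nat \<Rightarrow> real) \<Rightarrow> nat \<Rightarrow> nat \<Rightarrow> nat \<Rightarrow> nat \<Rightarrow> real vec" where
  "theta_hat s u pstar q0 q n = vec (pstar + q0)
     (\<lambda>k. if k < pstar + q then vec_index (theta s u pstar q n) k else 0)"

definition vnorm :: "real vec \<Rightarrow> real" where
  "vnorm v = sqrt (\<Sum>i<dim_vec v. (vec_index v i)\<^sup>2)"

end

theory Submission
  imports Defs
begin

no_notation vec_nth (infixl \<open>$\<close> 90)

lemma compact_sphere_fun:
  fixes N :: nat
  shows "compact {x::nat\<Rightarrow>real. x \<in> Pi UNIV (\<lambda>i. if i < N then {-1..1} else {0}) \<and> (\<Sum>i<N. (x i)\<^sup>2) = 1}"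
proof -
  have c1: "compact (PiE UNIV (\<lambda>i. if i < N then {-1..1::real} else {0}))"
  proof -
    have "compactin (product_topology (\<lambda>i. euclidean) UNIV) (PiE UNIV (\<lambda>i. if i < N then {-1..1::real} else {0}))"
      by (subst compactin_PiE) auto
    then show ?thesis by (simp add: euclidean_product_topology)
  qed
  have c2: "closed {x::nat\<Rightarrow>real. (\<Sum>i<N. (x i)\<^sup>2) = 1}"
  proof (rule closed_Collect_eq)
    show "continuous_on UNIV (\<lambda>x::nat\<Rightarrow>real. (\<Sum>i<N. (x i)\<^sup>2))"
      by (intro continuous_intros continuous_on_compose2[OF continuous_on_product_coordinates]) auto
  qed auto
  have "compact (PiE UNIV (\<lambda>i. if i < N then {-1..1::real} else {0}) \<inter> {x::nat\<Rightarrow>real. (\<Sum>i<N. (x i)\<^sup>2) = 1})"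
    using c1 c2 by (rule compact_Int_closed)
  moreover have "PiE UNIV (\<lambda>i. if i < N then {-1..1::real} else {0}) = Pi UNIV (\<lambda>i. if i < N then {-1..1::real} else {0})"
    by (auto simp: PiE_def extensional_def)
  ultimately show ?thesis by (simp add: Int_def)
qed

definition qf :: "(nat \<Rightarrow> nat \<Rightarrow> real) \<Rightarrow> nat \<Rightarrow> (nat \<Rightarrow> real) \<Rightarrow> real" where
  "qf Q N x = (\<Sum>j<N. \<Sum>k<N. Q j k * x j * x k)"

lemma qf_cont: "continuous_on S (qf Q N)"
  unfolding qf_def
  by (intro continuous_intros continuous_on_subset[OF continuous_on_product_coordinates]) auto

lemma exists_min:
  assumes "N > 0"
  shows "\<exists>x0. (\<forall>i\<ge>N. x0 i = 0) \<and> (\<Sum>i<N. (x0 i)\<^sup>2) = 1 \<and>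
     (\<forall>x. (\<forall>i\<ge>N. x i = 0) \<and> (\<Sum>i<N. (x i)\<^sup>2) = 1 \<longrightarrow> qf Q N x0 \<le> qf Q N x)"
proof -
  let ?S = "{x::nat\<Rightarrow>real. x \<in> Pi UNIV (\<lambda>i. if i < N then {-1..1} else {0}) \<and> (\<Sum>i<N. (x i)\<^sup>2) = 1}"
  have ne: "?S \<noteq> {}"
  proof -
    have e: "(\<Sum>i<N. ((\<lambda>i. if i = 0 then 1 else 0::real) i)\<^sup>2) = (\<Sum>i<N. (if i = 0 then 1 else 0::real))"
      by (rule sum.cong) auto
    have "(\<lambda>i. if i = 0 then 1 else 0::real) \<in> ?S" using assms e by (auto simp: Pi_def)
    then show ?thesis by blast
  qed
  obtain x0 where x0: "x0 \<in> ?S" "\<forall>y\<in>?S. qf Q N x0 \<le> qf Q N y"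
    using continuous_attains_inf[OF compact_sphere_fun ne qf_cont] by blast
  have mem: "x \<in> ?S" if "\<forall>i\<ge>N. x i = 0" "(\<Sum>i<N. (x i)\<^sup>2) = 1" for x
  proof -
    have "\<bar>x i\<bar> \<le> 1" if "i < N" for i
    proof -
      have "(x i)\<^sup>2 \<le> (\<Sum>i<N. (x i)\<^sup>2)"
        by (rule member_le_sum) (use \<open>i<N\<close> in auto)
      then have "(x i)\<^sup>2 \<le> 1\<^sup>2" using \<open>(\<Sum>i<N. (x i)\<^sup>2) = 1\<close> by simp
      then show ?thesis using abs_le_square_iff[of "x i" 1] by simp
    qed
    then show ?thesis using that by (force simp: abs_le_iff)
  qed
  show ?thesis
    apply (rule exI[of _ x0])
  proof (intro conjI allI impI)
    show "x0 i = 0" if "N \<le> i" for i using x0(1) that by (auto simp: Pi_def dest!: spec[of _ i])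
    show "(\<Sum>i<N. (x0 i)\<^sup>2) = 1" using x0(1) by auto
    show "qf Q N x0 \<le> qf Q N x" if "(\<forall>i\<ge>N. x i = 0) \<and> (\<Sum>i<N. (x i)\<^sup>2) = 1" for x
      using x0(2) mem that by blast
  qed
qed

lemma qf_expand:
  assumes sym: "\<forall>j<N. \<forall>k<N. Q j k = Q k j"
  shows "qf Q N (\<lambda>i. x i + t * g i) = qf Q N x + 2 * t * (\<Sum>j<N. g j * (\<Sum>k<N. Q j k * x k)) + t\<^sup>2 * qf Q N g"
proof -
  define B where "B = (\<Sum>j<N. \<Sum>k<N. Q j k * g j * x k)"
  define C where "C = (\<Sum>j<N. \<Sum>k<N. Q j k * x j * g k)"
  have E1: "qf Q N (\<lambda>i. x i + t * g i) = qf Q N x + t * B + t * C + t\<^sup>2 * qf Q N g"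
    unfolding qf_def B_def C_def by (simp add: sum_distrib_left sum.distrib[symmetric] algebra_simps power2_eq_square)
  have E2: "C = B"
  proof -
    have "C = (\<Sum>k<N. \<Sum>j<N. Q j k * x j * g k)" unfolding C_def by (rule sum.swap)
    also have "\<dots> = B" unfolding B_def
      using sym by (intro sum.cong refl) (auto simp: mult.commute)
    finally show ?thesis .
  qed
  have E3: "(\<Sum>j<N. g j * (\<Sum>k<N. Q j k * x k)) = B"
    unfolding B_def by (simp add: sum_distrib_left algebra_simps)
  show ?thesis unfolding E1 E2 E3 by (simp add: algebra_simps)
qed

lemma qf_scale: "qf Q N (\<lambda>i. a * x i) = a\<^sup>2 * qf Q N x"
  unfolding qf_def by (simp add: sum_distrib_left algebra_simps power2_eq_square)

lemma qf_restrict: "qf Q N (\<lambda>i. if i < N then x i else 0) = qf Q N x"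
  unfolding qf_def by (intro sum.cong refl) auto

lemma rayleigh_eig:
  assumes N: "N > 0" and sym: "\<forall>j<N. \<forall>k<N. Q j k = Q k j"
  shows "\<exists>x0 m. (\<forall>i\<ge>N. x0 i = 0) \<and> (\<Sum>i<N. (x0 i)\<^sup>2) = 1 \<and>
     (\<forall>j<N. (\<Sum>k<N. Q j k * x0 k) = m * x0 j) \<and> (\<forall>x. m * (\<Sum>i<N. (x i)\<^sup>2) \<le> qf Q N x)"
proof -
  obtain x0 where x0: "\<forall>i\<ge>N. x0 i = 0" "(\<Sum>i<N. (x0 i)\<^sup>2) = 1"
    "\<And>x. (\<forall>i\<ge>N. x i = 0) \<Longrightarrow> (\<Sum>i<N. (x i)\<^sup>2) = 1 \<Longrightarrow> qf Q N x0 \<le> qf Q N x"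
    using exists_min[OF N, of Q] by blast
  define m where "m = qf Q N x0"
  have bound: "m * (\<Sum>i<N. (x i)\<^sup>2) \<le> qf Q N x" for x
  proof -
    define x' where "x' = (\<lambda>i. if i < N then x i else 0)"
    have qx: "qf Q N x' = qf Q N x" unfolding x'_def by (rule qf_restrict)
    have nx: "(\<Sum>i<N. (x' i)\<^sup>2) = (\<Sum>i<N. (x i)\<^sup>2)" unfolding x'_def by (intro sum.cong) auto
    define s where "s = (\<Sum>i<N. (x i)\<^sup>2)"
    show ?thesis
    proof (cases "s = 0")
      case True
      then have "\<forall>i<N. x i = 0" unfolding s_def using sum_nonneg_eq_0_iff[of "{..<N}" "\<lambda>i. (x i)\<^sup>2"] by auto
      then have "qf Q N x = 0" unfolding qf_def by simp
      then show ?thesis using True s_def by simp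
    next
      case False
      have s0: "s > 0" using False unfolding s_def by (metis less_eq_real_def sum_nonneg zero_le_power2)
      define c where "c = sqrt s"
      have c0: "c > 0" using s0 c_def by simp
      have cs: "c\<^sup>2 = s" using s0 c_def by simp
      define y where "y = (\<lambda>i. (1/c) * x' i)"
      have "(\<Sum>i<N. (y i)\<^sup>2) = s / c\<^sup>2" unfolding y_def s_def
        by (simp add: power_divide sum_divide_distrib[symmetric] nx)
      then have ny: "(\<Sum>i<N. (y i)\<^sup>2) = 1" using cs s0 by simp
      have "\<forall>i\<ge>N. y i = 0" unfolding y_def x'_def by simp
      then have "m \<le> qf Q N y" using x0(3) ny m_def by blast
      also have "qf Q N y = (1/c)\<^sup>2 * qf Q N x" unfolding y_def qf_scale qx ..
      finally have "m \<le> qf Q N x / s" using cs by (simp add: power_divide)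
      then show ?thesis using s0 s_def by (simp add: field_simps)
    qed
  qed
  define g where "g = (\<lambda>j. if j < N then (\<Sum>k<N. Q j k * x0 k) - m * x0 j else 0)"
  define G where "G = (\<Sum>j<N. (g j)\<^sup>2)"
  define D where "D = qf Q N g - m * (\<Sum>j<N. (g j)\<^sup>2)"
  have ineq: "0 \<le> 2 * t * G + t\<^sup>2 * D" for t
  proof -
    have "m * (\<Sum>i<N. (x0 i + t * g i)\<^sup>2) \<le> qf Q N (\<lambda>i. x0 i + t * g i)" by (rule bound)
    also have "\<dots> = m + 2 * t * (\<Sum>j<N. g j * (\<Sum>k<N. Q j k * x0 k)) + t\<^sup>2 * qf Q N g"
      using qf_expand[OF sym] m_def by simp
    finally have a: "m * (\<Sum>i<N. (x0 i + t * g i)\<^sup>2) \<le> m + 2 * t * (\<Sum>j<N. g j * (\<Sum>k<N. Q j k * x0 k)) + t\<^sup>2 * qf Q N g" .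
    have b: "(\<Sum>i<N. (x0 i + t * g i)\<^sup>2) = 1 + 2 * t * (\<Sum>j<N. g j * x0 j) + t\<^sup>2 * (\<Sum>j<N. (g j)\<^sup>2)"
      using x0(2) by (simp add: power2_sum sum.distrib sum_distrib_left algebra_simps power_mult_distrib)
    have c: "(\<Sum>j<N. g j * (\<Sum>k<N. Q j k * x0 k)) - m * (\<Sum>j<N. g j * x0 j) = G"
      unfolding G_def by (simp add: sum_distrib_left sum_subtractf[symmetric] power2_eq_square g_def algebra_simps)
    show ?thesis using a b c unfolding D_def by (simp add: algebra_simps)
  qed
  have G0: "G = 0"
  proof (rule ccontr)
    assume "G \<noteq> 0"
    then have Gp: "G > 0" unfolding G_def by (metis less_eq_real_def sum_nonneg zero_le_power2)
    define t where "t = - G / (\<bar>D\<bar> + 1)"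
    have "0 \<le> 2 * t * G + t\<^sup>2 * D" by (rule ineq)
    moreover have "t\<^sup>2 * D \<le> t\<^sup>2 * \<bar>D\<bar>" by (simp add: mult_left_mono)
    moreover have "t\<^sup>2 * \<bar>D\<bar> < - 2 * t * G"
    proof -
      have "t\<^sup>2 * \<bar>D\<bar> = G\<^sup>2 * \<bar>D\<bar> / (\<bar>D\<bar> + 1)\<^sup>2" unfolding t_def by (simp add: power_divide)
      also have "\<dots> \<le> G\<^sup>2 / (\<bar>D\<bar> + 1)"
      proof -
        have "G\<^sup>2 * \<bar>D\<bar> / (\<bar>D\<bar> + 1)\<^sup>2 = (G\<^sup>2 / (\<bar>D\<bar> + 1)) * (\<bar>D\<bar> / (\<bar>D\<bar> + 1))"
          by (simp add: power2_eq_square)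
        also have "\<dots> \<le> (G\<^sup>2 / (\<bar>D\<bar> + 1)) * 1"
          by (rule mult_left_mono) auto
        finally show ?thesis by simp
      qed
      also have "\<dots> < 2 * G\<^sup>2 / (\<bar>D\<bar> + 1)" using Gp by (simp add: divide_strict_right_mono)
      also have "\<dots> = - 2 * t * G" unfolding t_def by (simp add: power2_eq_square)
      finally show ?thesis .
    qed
    ultimately show False by linarith
  qed
  have "\<forall>j<N. g j = 0" using G0 unfolding G_def using sum_nonneg_eq_0_iff[of "{..<N}" "\<lambda>i. (g i)\<^sup>2"] by auto
  then have "\<forall>j<N. (\<Sum>k<N. Q j k * x0 k) = m * x0 j" unfolding g_def by auto
  then show ?thesis using x0(1,2) bound by blast
qed

lemma finite_eigenvalues:
  fixes A :: "real mat"
  assumes A: "A \<in> carrier_mat N N"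
  shows "finite {k. eigenvalue A k}"
proof -
  have "char_poly A \<noteq> 0" using degree_monic_char_poly[OF A] by (metis coeff_0 one_neq_zero)
  then have "finite {k. poly (char_poly A) k = 0}" by (rule poly_roots_finite)
  then show ?thesis using eigenvalue_root_char_poly[OF A] by simp
qed

lemma lam_min_bound:
  fixes A :: "real mat"
  assumes A: "A \<in> carrier_mat N N" and N: "N > 0" and sym: "\<forall>j<N. \<forall>k<N. A $$ (j,k) = A $$ (k,j)"
  shows "Min {k. eigenvalue A k} * (\<Sum>i<N. (x i)\<^sup>2) \<le> qf (\<lambda>j k. A $$ (j,k)) N x"
proof -
  obtain x0 m where x0: "\<forall>i\<ge>N. x0 i = 0" "(\<Sum>i<N. (x0 i)\<^sup>2) = 1"
     "\<forall>j<N. (\<Sum>k<N. A $$ (j,k) * x0 k) = m * x0 j" "\<forall>x. m * (\<Sum>i<N. (x i)\<^sup>2) \<le> qf (\<lambda>j k. A $$ (j,k)) N x"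
    using rayleigh_eig[OF N, of "\<lambda>j k. A $$ (j,k)"] sym by blast
  define v where "v = vec N x0"
  have vc: "v \<in> carrier_vec N" unfolding v_def by simp
  have vnz: "v \<noteq> 0\<^sub>v N"
  proof
    assume "v = 0\<^sub>v N"
    then have "\<forall>i<N. x0 i = 0" unfolding v_def by (metis index_vec index_zero_vec(1))
    then have "(\<Sum>i<N. (x0 i)\<^sup>2) = 0" by simp
    then show False using x0(2) by simp
  qed
  have Av: "A *\<^sub>v v = m \<cdot>\<^sub>v v"
  proof (rule eq_vecI)
    show "dim_vec (A *\<^sub>v v) = dim_vec (m \<cdot>\<^sub>v v)" using A vc by simp
    fix j assume "j < dim_vec (m \<cdot>\<^sub>v v)"
    then have j: "j < N" using vc by simp
    have "(A *\<^sub>v v) $ j = row A j \<bullet> v" using A j by simp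
    also have "\<dots> = (\<Sum>k<N. A $$ (j,k) * x0 k)"
      unfolding scalar_prod_def v_def using A j by (auto intro!: sum.cong simp: lessThan_atLeast0)
    also have "\<dots> = m * x0 j" using x0(3) j by simp
    also have "\<dots> = (m \<cdot>\<^sub>v v) $ j" using j v_def by simp
    finally show "(A *\<^sub>v v) $ j = (m \<cdot>\<^sub>v v) $ j" .
  qed
  have "eigenvalue A m" unfolding eigenvalue_def eigenvector_def
    using A vc vnz Av by auto
  then have "Min {k. eigenvalue A k} \<le> m" using finite_eigenvalues[OF A] by (simp add: Min_le)
  then have "Min {k. eigenvalue A k} * (\<Sum>i<N. (x i)\<^sup>2) \<le> m * (\<Sum>i<N. (x i)\<^sup>2)"
    by (simp add: mult_right_mono sum_nonneg)
  also have "\<dots> \<le> qf (\<lambda>j k. A $$ (j,k)) N x" using x0(4) by blast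
  finally show ?thesis .
qed

lemma two_mul_le: "2 * (a::real) * b \<le> a\<^sup>2 + b\<^sup>2"
  using sum_squares_bound[of a b] by simp

lemma ridge:
  fixes \<psi> :: "nat \<Rightarrow> nat \<Rightarrow> real"
  assumes eq: "\<forall>j<N. z j + (\<Sum>i<n. \<psi> i j * (\<Sum>k<N. \<psi> i k * z k)) = - t j + (\<Sum>i<n. \<psi> i j * r i)"
  shows "(\<Sum>j<N. (z j)\<^sup>2) + (\<Sum>i<n. (\<Sum>k<N. \<psi> i k * z k)\<^sup>2) \<le> (\<Sum>j<N. (t j)\<^sup>2) + (\<Sum>i<n. (r i)\<^sup>2)"
proof -
  define p where "p = (\<lambda>i. \<Sum>k<N. \<psi> i k * z k)"
  have L: "(\<Sum>j<N. z j * (z j + (\<Sum>i<n. \<psi> i j * p i))) = (\<Sum>j<N. (z j)\<^sup>2) + (\<Sum>i<n. (p i)\<^sup>2)"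
  proof -
    have "(\<Sum>j<N. z j * (\<Sum>i<n. \<psi> i j * p i)) = (\<Sum>j<N. \<Sum>i<n. z j * \<psi> i j * p i)"
      by (simp add: sum_distrib_left mult.assoc)
    also have "\<dots> = (\<Sum>i<n. \<Sum>j<N. z j * \<psi> i j * p i)" by (rule sum.swap)
    also have "\<dots> = (\<Sum>i<n. (p i)\<^sup>2)"
      by (simp add: p_def power2_eq_square sum_distrib_right mult.commute mult.left_commute)
    finally show ?thesis by (simp add: distrib_left sum.distrib power2_eq_square)
  qed
  have R: "(\<Sum>j<N. z j * (- t j + (\<Sum>i<n. \<psi> i j * r i))) = - (\<Sum>j<N. z j * t j) + (\<Sum>i<n. p i * r i)"
  proof -
    have "(\<Sum>j<N. z j * (\<Sum>i<n. \<psi> i j * r i)) = (\<Sum>j<N. \<Sum>i<n. z j * \<psi> i j * r i)"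
      by (simp add: sum_distrib_left mult.assoc)
    also have "\<dots> = (\<Sum>i<n. \<Sum>j<N. z j * \<psi> i j * r i)" by (rule sum.swap)
    also have "\<dots> = (\<Sum>i<n. p i * r i)"
      by (simp add: p_def sum_distrib_right sum_distrib_left algebra_simps)
    finally show ?thesis by (simp add: right_diff_distrib sum_subtractf)
  qed
  have LR: "(\<Sum>j<N. (z j)\<^sup>2) + (\<Sum>i<n. (p i)\<^sup>2) = - (\<Sum>j<N. z j * t j) + (\<Sum>i<n. p i * r i)"
  proof -
    have "(\<Sum>j<N. z j * (z j + (\<Sum>i<n. \<psi> i j * p i))) = (\<Sum>j<N. z j * (- t j + (\<Sum>i<n. \<psi> i j * r i)))"
      using eq unfolding p_def by (intro sum.cong refl) simp
    then show ?thesis using L R by simp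
  qed
  have b1: "- (2 * (\<Sum>j<N. z j * t j)) \<le> (\<Sum>j<N. (z j)\<^sup>2) + (\<Sum>j<N. (t j)\<^sup>2)"
  proof -
    have "- (2 * (\<Sum>j<N. z j * t j)) = (\<Sum>j<N. 2 * (- z j) * t j)" by (simp add: sum_distrib_left sum_negf mult.assoc)
    also have "\<dots> \<le> (\<Sum>j<N. (- z j)\<^sup>2 + (t j)\<^sup>2)" by (rule sum_mono) (rule two_mul_le)
    finally show ?thesis by (simp add: sum.distrib)
  qed
  have b2: "2 * (\<Sum>i<n. p i * r i) \<le> (\<Sum>i<n. (p i)\<^sup>2) + (\<Sum>i<n. (r i)\<^sup>2)"
  proof -
    have "2 * (\<Sum>i<n. p i * r i) = (\<Sum>i<n. 2 * p i * r i)" by (simp add: sum_distrib_left mult.assoc)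
    also have "\<dots> \<le> (\<Sum>i<n. (p i)\<^sup>2 + (r i)\<^sup>2)" by (rule sum_mono) (rule two_mul_le)
    finally show ?thesis by (simp add: sum.distrib)
  qed
  show ?thesis using LR b1 b2 unfolding p_def by linarith
qed

lemma w_moments:
  assumes P: "prob_space M" and D: "distributed M lborel W (\<lambda>x. ennreal (std_normal_density x))"
  shows "integrable M (\<lambda>\<omega>. (W \<omega>)^k)"
    and "(\<integral>\<omega>. (W \<omega>)^2 \<partial>M) = 1" and "(\<integral>\<omega>. (W \<omega>)^4 \<partial>M) = 3"
proof -
  have nn: "\<And>x. 0 \<le> std_normal_density x" by (simp add: normal_density_nonneg)
  show "integrable M (\<lambda>\<omega>. (W \<omega>)^k)"
    using distributed_integrable[OF D, of "\<lambda>x. x^k"] integrable_std_normal_moment[of k] nn by simp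
  have "(\<integral>\<omega>. (W \<omega>)^(2*1) \<partial>M) = (\<integral>x. std_normal_density x * x^(2*1) \<partial>lborel)"
    using distributed_integral[OF D, of "\<lambda>x. x^(2*1)"] nn by simp
  also have "\<dots> = 1" unfolding integral_std_normal_moment_even by (simp add: eval_nat_numeral)
  finally show "(\<integral>\<omega>. (W \<omega>)^2 \<partial>M) = 1" by simp
  have "(\<integral>\<omega>. (W \<omega>)^(2*2) \<partial>M) = (\<integral>x. std_normal_density x * x^(2*2) \<partial>lborel)"
    using distributed_integral[OF D, of "\<lambda>x. x^(2*2)"] nn by simp
  also have "\<dots> = 3" unfolding integral_std_normal_moment_even by (simp add: eval_nat_numeral fact_numeral)
  finally show "(\<integral>\<omega>. (W \<omega>)^4 \<partial>M) = 3" by simp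
qed

lemma cross_moments:
  assumes P: "prob_space M" and ind: "prob_space.indep_vars M (\<lambda>_. borel) w UNIV"
    and D: "\<And>i. distributed M lborel (w i) (\<lambda>x. ennreal (std_normal_density x))"
  shows "integrable M (\<lambda>\<omega>. ((w i \<omega>)\<^sup>2 - 1) * ((w j \<omega>)\<^sup>2 - 1)) \<and>
         (\<integral>\<omega>. ((w i \<omega>)\<^sup>2 - 1) * ((w j \<omega>)\<^sup>2 - 1) \<partial>M) = (if i = j then 2 else 0)"
proof -
  interpret prob_space M by (rule P)
  define V where "V = (\<lambda>i \<omega>. (w i \<omega>)\<^sup>2 - 1)"
  have intV: "integrable M (V i)" for i
    unfolding V_def using w_moments(1)[OF P D, of i 2] by (intro Bochner_Integration.integrable_diff) auto
  have EV: "(\<integral>\<omega>. V i \<omega> \<partial>M) = 0" for i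
    unfolding V_def using w_moments[OF P D, of i] by (subst Bochner_Integration.integral_diff) (auto simp: prob_space)
  show ?thesis
  proof (cases "i = j")
    case True
    have e: "(\<lambda>\<omega>. ((w i \<omega>)\<^sup>2 - 1) * ((w i \<omega>)\<^sup>2 - 1)) = (\<lambda>\<omega>. ((w i \<omega>)^4 - 2 * (w i \<omega>)^2) + 1)"
      by (rule ext) (simp add: algebra_simps power2_eq_square eval_nat_numeral)
    have i4: "integrable M (\<lambda>\<omega>. (w i \<omega>)^4)" and i2: "integrable M (\<lambda>\<omega>. (w i \<omega>)^2)"
      using w_moments(1)[OF P D] by auto
    have int: "integrable M (\<lambda>\<omega>. ((w i \<omega>)^4 - 2 * (w i \<omega>)^2) + 1)"
      using i4 i2 by auto
    have "(\<integral>\<omega>. ((w i \<omega>)^4 - 2 * (w i \<omega>)^2) + 1 \<partial>M) = 3 - 2 * 1 + 1"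
      using i4 i2 w_moments(2,3)[OF P D, of i]
      by (simp add: Bochner_Integration.integral_add Bochner_Integration.integral_diff prob_space)
    then show ?thesis using True e int by simp
  next
    case False
    have indV: "indep_vars (\<lambda>_. borel) V {i, j}"
    proof -
      have "indep_vars (\<lambda>_. borel) (\<lambda>i \<omega>. (\<lambda>x. x\<^sup>2 - 1) (w i \<omega>)) UNIV"
        by (rule indep_vars_compose2[OF ind]) auto
      then show ?thesis unfolding V_def by (rule indep_vars_subset) auto
    qed
    have p: "(\<lambda>\<omega>. \<Prod>k\<in>{i,j}. V k \<omega>) = (\<lambda>\<omega>. ((w i \<omega>)\<^sup>2 - 1) * ((w j \<omega>)\<^sup>2 - 1))"
      using False unfolding V_def by auto
    have "integrable M (\<lambda>\<omega>. \<Prod>k\<in>{i,j}. V k \<omega>)"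
      by (rule indep_vars_integrable) (use indV intV in auto)
    moreover have "(\<integral>\<omega>. (\<Prod>k\<in>{i,j}. V k \<omega>) \<partial>M) = (\<Prod>k\<in>{i,j}. \<integral>\<omega>. V k \<omega> \<partial>M)"
      by (rule indep_vars_lebesgue_integral) (use indV intV in auto)
    ultimately show ?thesis using False EV unfolding p by simp
  qed
qed

lemma lln_w:
  assumes P: "prob_space M" and ind: "prob_space.indep_vars M (\<lambda>_. borel) w UNIV"
    and D: "\<And>i. distributed M lborel (w i) (\<lambda>x. ennreal (std_normal_density x))"
  shows "AE \<omega> in M. \<forall>\<^sub>F n in sequentially. (\<Sum>i<n. (w (Suc i) \<omega>)\<^sup>2) \<le> 4 * real n"
proof -
  interpret prob_space M by (rule P)
  have wm[measurable]: "w i \<in> borel_measurable M" for i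
    using distributed_measurable[OF D[of i]] by (simp add: measurable_def)
  define T where "T = (\<lambda>m \<omega>. \<Sum>i<(2::nat)^m. (w (Suc i) \<omega>)\<^sup>2 - 1)"
  have Tm[measurable]: "T m \<in> borel_measurable M" for m unfolding T_def by measurable
  have ET: "integrable M (\<lambda>\<omega>. (T m \<omega>)\<^sup>2) \<and> (\<integral>\<omega>. (T m \<omega>)\<^sup>2 \<partial>M) = 2 * 2^m" for m
  proof -
    have sq: "(\<lambda>\<omega>. (T m \<omega>)\<^sup>2) = (\<lambda>\<omega>. \<Sum>i<(2::nat)^m. \<Sum>j<(2::nat)^m. ((w (Suc i) \<omega>)\<^sup>2 - 1) * ((w (Suc j) \<omega>)\<^sup>2 - 1))"
      unfolding T_def by (simp add: power2_eq_square[of "sum _ _"] sum_product)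
    have ints: "integrable M (\<lambda>\<omega>. ((w (Suc i) \<omega>)\<^sup>2 - 1) * ((w (Suc j) \<omega>)\<^sup>2 - 1))" for i j
      using cross_moments[OF P ind D] by blast
    have "(\<integral>\<omega>. (T m \<omega>)\<^sup>2 \<partial>M) = (\<Sum>i<(2::nat)^m. \<Sum>j<(2::nat)^m. (if Suc i = Suc j then 2 else 0))"
      unfolding sq using ints cross_moments[OF P ind D] by (simp add: Bochner_Integration.integral_sum)
    also have "\<dots> = (\<Sum>i<(2::nat)^m. 2)" by (simp add: sum.delta)
    finally show ?thesis unfolding sq using ints by auto
  qed
  define A where "A = (\<lambda>m. {\<omega>\<in>space M. (4::real)^m \<le> (T m \<omega>)\<^sup>2})"
  have Am: "A m \<in> sets M" for m unfolding A_def by measurable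
  have mA: "measure M (A m) \<le> 2 * (1/2)^m" for m
  proof -
    have "measure M (A m) \<le> (\<integral>\<omega>. (T m \<omega>)\<^sup>2 \<partial>M) / 4^m"
      unfolding A_def by (rule integral_Markov_inequality_measure[where A="space M"]) (use ET in auto)
    also have "\<dots> = 2 * 2^m / 4^m" using ET by simp
    also have "\<dots> = 2 * (1/2)^m" by (simp add: power_divide[symmetric] power_mult_distrib[symmetric] field_simps)
    finally show ?thesis .
  qed
  have summ: "summable (\<lambda>m. measure M (A m))"
    by (rule summable_comparison_test'[where g="\<lambda>m. 2 * (1/2)^m"]) (use mA in auto)
  have "AE \<omega> in M. \<forall>\<^sub>F m in sequentially. \<omega> \<in> space M - A m"
    by (rule borel_cantelli_AE1[OF Am _ summ]) (simp add: emeasure_eq_measure)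
  then show ?thesis
  proof (rule AE_mp, intro AE_I2 impI)
    fix \<omega> assume "\<omega> \<in> space M" and ev: "\<forall>\<^sub>F m in sequentially. \<omega> \<in> space M - A m"
    then obtain M0 where M0: "\<And>m. m \<ge> M0 \<Longrightarrow> \<omega> \<notin> A m" unfolding eventually_sequentially by blast
    have good: "(\<Sum>i<(2::nat)^m. (w (Suc i) \<omega>)\<^sup>2) \<le> 2 * 2^m" if "m \<ge> M0" for m
    proof -
      have "(T m \<omega>)\<^sup>2 < 4^m" using M0[OF that] \<open>\<omega> \<in> space M\<close> unfolding A_def by auto
      also have "(4::real)^m = (2^m)\<^sup>2" by (simp add: power_mult_distrib[symmetric] power2_eq_square)
      finally have "T m \<omega> < 2^m" using power2_less_imp_less[of "T m \<omega>" "2^m"] by (smt (verit) power2_abs abs_ge_self zero_le_power)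
      moreover have "T m \<omega> = (\<Sum>i<(2::nat)^m. (w (Suc i) \<omega>)\<^sup>2) - 2^m"
        unfolding T_def by (simp add: sum_subtractf)
      ultimately show ?thesis by simp
    qed
    show "\<forall>\<^sub>F n in sequentially. (\<Sum>i<n. (w (Suc i) \<omega>)\<^sup>2) \<le> 4 * real n"
      unfolding eventually_sequentially
    proof (intro exI[of _ "2^M0"] allI impI)
      fix n :: nat assume n: "2^M0 \<le> n"
      then have "n \<ge> 1" by (metis le_trans one_le_power one_le_numeral)
      then obtain k where k: "2^k \<le> n" "n < 2^(k+1)" using ex_power_ivl1[of 2 n] by auto
      have "M0 \<le> k + 1"
      proof (rule ccontr)
        assume "\<not> M0 \<le> k + 1"
        then have "2^(k+1) \<le> (2::nat)^M0" by (intro power_increasing) auto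
        then show False using n k by simp
      qed
      have "(\<Sum>i<n. (w (Suc i) \<omega>)\<^sup>2) \<le> (\<Sum>i<(2::nat)^(k+1). (w (Suc i) \<omega>)\<^sup>2)"
        by (rule sum_mono2) (use k in auto)
      also have "\<dots> \<le> 2 * 2^(k+1)" by (rule good) fact
      also have "\<dots> \<le> 4 * real n"
      proof -
        have "real (2^k) \<le> real n" using k by linarith
        then show ?thesis by simp
      qed
      finally show "(\<Sum>i<n. (w (Suc i) \<omega>)\<^sup>2) \<le> 4 * real n" .
    qed
  qed
qed

lemma u_bounded:
  fixes u :: "nat \<Rightarrow> 'a \<Rightarrow> real"
  assumes P: "prob_space M" and dpos: "\<delta> > 0"
    and D: "\<And>i. distributed M lborel (u i) (\<lambda>x. ennreal (indicator {-\<delta>..\<delta>} x / (2 * \<delta>)))"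
  shows "AE \<omega> in M. \<forall>k. \<bar>u k \<omega>\<bar> \<le> \<delta>"
proof -
  have "AE \<omega> in M. \<bar>u k \<omega>\<bar> \<le> \<delta>" for k
  proof -
  have dd: "distr M lborel (u k) = density lborel (\<lambda>x. ennreal (indicator {-\<delta>..\<delta>} x / (2 * \<delta>)))"
    using distributed_distr_eq_density[OF D[of k]] .
  have "AE x in density lborel (\<lambda>x. ennreal (indicator {-\<delta>..\<delta>} x / (2 * \<delta>))). \<bar>x\<bar> \<le> \<delta>"
    by (subst AE_density) (auto simp: indicator_def split: if_splits)
  then have "AE x in distr M lborel (u k). \<bar>x\<bar> \<le> \<delta>" unfolding dd .
  then show "AE \<omega> in M. \<bar>u k \<omega>\<bar> \<le> \<delta>"
    by (rule AE_distrD[OF distributed_measurable[OF D[of k]]])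
  qed
  then show ?thesis by (simp add: AE_all_countable)
qed

lemma Pinv_eq:
  "Pinv s u p q n = mat (p+q) (p+q) (\<lambda>(j,k). (if j = k then 1 else 0) +
      (\<Sum>i<n. psi s u p q i $ j * psi s u p q i $ k))"
  unfolding Pinv_def by (rule eq_matI) auto

lemma mat_row_sum:
  fixes \<psi> :: "nat \<Rightarrow> nat \<Rightarrow> real" and x :: "nat \<Rightarrow> real"
  assumes "j < N"
  shows "(\<Sum>k<N. ((if j = k then 1 else 0) + (\<Sum>i<n. \<psi> i j * \<psi> i k)) * x k) =
         x j + (\<Sum>i<n. \<psi> i j * (\<Sum>k<N. \<psi> i k * x k))"
proof -
  have "(\<Sum>k<N. ((if j = k then 1 else 0) + (\<Sum>i<n. \<psi> i j * \<psi> i k)) * x k) =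
     (\<Sum>k<N. (if j = k then x k else 0)) + (\<Sum>k<N. \<Sum>i<n. \<psi> i j * \<psi> i k * x k)"
    unfolding distrib_right sum.distrib sum_distrib_right by (intro arg_cong2[where f="(+)"] sum.cong) auto
  also have "(\<Sum>k<N. (if j = k then x k else 0)) = x j" using assms by (simp add: sum.delta)
  also have "(\<Sum>k<N. \<Sum>i<n. \<psi> i j * \<psi> i k * x k) = (\<Sum>i<n. \<Sum>k<N. \<psi> i j * \<psi> i k * x k)"
    by (rule sum.swap)
  also have "\<dots> = (\<Sum>i<n. \<psi> i j * (\<Sum>k<N. \<psi> i k * x k))"
    by (simp add: sum_distrib_left mult.assoc)
  finally show ?thesis .
qed

lemma qf_gram:
  fixes \<psi> :: "nat \<Rightarrow> nat \<Rightarrow> real" and x :: "nat \<Rightarrow> real"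
  shows  "qf (\<lambda>j k. (if j = k then 1 else 0) + (\<Sum>i<n. \<psi> i j * \<psi> i k)) N x =
     (\<Sum>j<N. (x j)\<^sup>2) + (\<Sum>i<n. (\<Sum>k<N. \<psi> i k * x k)\<^sup>2)"
proof -
  have "qf (\<lambda>j k. (if j = k then 1 else 0) + (\<Sum>i<n. \<psi> i j * \<psi> i k)) N x =
     (\<Sum>j<N. x j * (\<Sum>k<N. ((if j = k then 1 else 0) + (\<Sum>i<n. \<psi> i j * \<psi> i k)) * x k))"
    unfolding qf_def by (simp add: sum_distrib_left algebra_simps)
  also have "\<dots> = (\<Sum>j<N. x j * (x j + (\<Sum>i<n. \<psi> i j * (\<Sum>k<N. \<psi> i k * x k))))"
    by (intro sum.cong refl) (simp add: mat_row_sum)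
  also have "\<dots> = (\<Sum>j<N. (x j)\<^sup>2) + (\<Sum>j<N. \<Sum>i<n. x j * \<psi> i j * (\<Sum>k<N. \<psi> i k * x k))"
    by (simp add: distrib_left sum.distrib sum_distrib_left power2_eq_square mult.assoc)
  also have "(\<Sum>j<N. \<Sum>i<n. x j * \<psi> i j * (\<Sum>k<N. \<psi> i k * x k)) = (\<Sum>i<n. \<Sum>j<N. x j * \<psi> i j * (\<Sum>k<N. \<psi> i k * x k))"
    by (rule sum.swap)
  also have "\<dots> = (\<Sum>i<n. (\<Sum>k<N. \<psi> i k * x k)\<^sup>2)"
    by (intro sum.cong refl) (simp add: power2_eq_square sum_distrib_right mult.commute mult.left_commute)
  finally show ?thesis .
qed

lemma ls_bound:
  fixes s u :: "nat \<Rightarrow> real" and tb :: "real vec"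
  assumes N: "p + q > 0" and tb: "dim_vec tb = p + q" and n: "n \<ge> 1"
  shows "lam_min s u p q (n - 1) * (\<Sum>k<p+q. (theta s u p q n $ k - tb $ k)\<^sup>2) \<le>
    (\<Sum>k<p+q. (tb $ k)\<^sup>2) + (\<Sum>i<n. (s (i+1) - (\<Sum>k<p+q. psi s u p q i $ k * tb $ k))\<^sup>2)"
proof -
  define NN where "NN = p + q"
  define \<psi> where "\<psi> = (\<lambda>i k. psi s u p q i $ k)"
  define Q where "Q = (\<lambda>j k. (if j = k then 1 else 0) + (\<Sum>i<n. \<psi> i j * \<psi> i k))"
  define A where "A = Pinv s u p q n"
  have Aeq: "A = mat NN NN (\<lambda>(j,k). Q j k)" unfolding A_def Pinv_eq Q_def \<psi>_def NN_def by simp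
  have Ac: "A \<in> carrier_mat NN NN" unfolding Aeq by simp
  have Aij: "A $$ (j,k) = Q j k" if "j < NN" "k < NN" for j k unfolding Aeq using that by simp
  have Av: "(A *\<^sub>v v) $ j = v $ j + (\<Sum>i<n. \<psi> i j * (\<Sum>k<NN. \<psi> i k * v $ k))"
    if "v \<in> carrier_vec NN" "j < NN" for v j
  proof -
    have "(A *\<^sub>v v) $ j = (\<Sum>k<NN. Q j k * v $ k)"
      using that Ac by (auto simp: scalar_prod_def Aij lessThan_atLeast0 intro!: sum.cong)
    also have "\<dots> = v $ j + (\<Sum>i<n. \<psi> i j * (\<Sum>k<NN. \<psi> i k * v $ k))"
      unfolding Q_def by (rule mat_row_sum) fact
    finally show ?thesis .
  qed
  have inj: "v = 0\<^sub>v NN" if "v \<in> carrier_vec NN" "A *\<^sub>v v = 0\<^sub>v NN" for v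
  proof -
    have "\<forall>j<NN. v $ j + (\<Sum>i<n. \<psi> i j * (\<Sum>k<NN. \<psi> i k * v $ k)) = - 0 + (\<Sum>i<n. \<psi> i j * 0)"
    proof (intro allI impI)
      fix j assume j: "j < NN"
      have "(A *\<^sub>v v) $ j = 0" using that j by simp
      then show "v $ j + (\<Sum>i<n. \<psi> i j * (\<Sum>k<NN. \<psi> i k * v $ k)) = - 0 + (\<Sum>i<n. \<psi> i j * 0)"
        using Av[OF that(1) j] by simp
    qed
    from ridge[OF this] have "(\<Sum>j<NN. (v $ j)\<^sup>2) + (\<Sum>i<n. (\<Sum>k<NN. \<psi> i k * v $ k)\<^sup>2) \<le> 0" by simp
    moreover have "0 \<le> (\<Sum>i<n. (\<Sum>k<NN. \<psi> i k * v $ k)\<^sup>2)" by (simp add: sum_nonneg)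
    ultimately have "(\<Sum>j<NN. (v $ j)\<^sup>2) = 0" by (smt (verit) sum_nonneg zero_le_power2)
    then have "\<forall>j<NN. v $ j = 0" using sum_nonneg_eq_0_iff[of "{..<NN}" "\<lambda>j. (v $ j)\<^sup>2"] by simp
    then show ?thesis using that(1) by (intro eq_vecI) auto
  qed
  have dA: "det A \<noteq> 0" using det_0_iff_vec_prod_zero[OF Ac] inj by blast
  have "mat_inverse A \<noteq> None"
  proof
    assume "mat_inverse A = None"
    from mat_inverse(1)[OF Ac this, where b="()"] det_non_zero_imp_unit[OF Ac dA, where b="()"] show False by blast
  qed
  then obtain B where mi: "mat_inverse A = Some B" by auto
  have AB: "A * B = 1\<^sub>m NN" and Bc: "B \<in> carrier_mat NN NN" using mat_inverse(2)[OF Ac mi] by auto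
  define bv where "bv = vec NN (\<lambda>j. \<Sum>i<n. \<psi> i j * s (i + 1))"
  have th: "theta s u p q n = B *\<^sub>v bv"
    unfolding theta_def Pmat_def bv_def \<psi>_def NN_def A_def[symmetric] mi by simp
  have bvc: "bv \<in> carrier_vec NN" unfolding bv_def by simp
  have thc: "theta s u p q n \<in> carrier_vec NN" unfolding th using Bc bvc by simp
  have Ath: "A *\<^sub>v theta s u p q n = bv"
  proof -
    have "A *\<^sub>v (B *\<^sub>v bv) = (A * B) *\<^sub>v bv" by (rule assoc_mult_mat_vec[symmetric]) (use Ac Bc bvc in auto)
    also have "\<dots> = bv" unfolding AB using bvc by simp
    finally show ?thesis unfolding th .
  qed
  define z where "z = (\<lambda>k. theta s u p q n $ k - tb $ k)"
  define r where "r = (\<lambda>i. s (i+1) - (\<Sum>k<NN. \<psi> i k * tb $ k))"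
  have tbc: "tb \<in> carrier_vec NN" unfolding carrier_vec_def NN_def using tb by blast
  have eq: "\<forall>j<NN. z j + (\<Sum>i<n. \<psi> i j * (\<Sum>k<NN. \<psi> i k * z k)) = - tb $ j + (\<Sum>i<n. \<psi> i j * r i)"
  proof (intro allI impI)
    fix j assume j: "j < NN"
    define th where "th = theta s u p q n"
    have a1: "(A *\<^sub>v th) $ j = bv $ j" using Ath th_def by simp
    have a2: "bv $ j = (\<Sum>i<n. \<psi> i j * s (i + 1))" unfolding bv_def using j by simp
    have e1: "th $ j + (\<Sum>i<n. \<psi> i j * (\<Sum>k<NN. \<psi> i k * th $ k)) = (\<Sum>i<n. \<psi> i j * s (i + 1))"
      using Av[OF thc j] a1 a2 th_def by simp
    have inner: "(\<Sum>k<NN. \<psi> i k * z k) = (\<Sum>k<NN. \<psi> i k * th $ k) - (\<Sum>k<NN. \<psi> i k * tb $ k)" for i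
      unfolding z_def th_def[symmetric] by (simp only: right_diff_distrib sum_subtractf)
    have o1: "(\<Sum>i<n. \<psi> i j * (\<Sum>k<NN. \<psi> i k * z k)) =
       (\<Sum>i<n. \<psi> i j * (\<Sum>k<NN. \<psi> i k * th $ k)) - (\<Sum>i<n. \<psi> i j * (\<Sum>k<NN. \<psi> i k * tb $ k))"
      unfolding inner by (simp only: right_diff_distrib sum_subtractf)
    have o2: "(\<Sum>i<n. \<psi> i j * r i) = (\<Sum>i<n. \<psi> i j * s (i + 1)) - (\<Sum>i<n. \<psi> i j * (\<Sum>k<NN. \<psi> i k * tb $ k))"
      unfolding r_def by (simp only: right_diff_distrib sum_subtractf)
    have zj: "z j = th $ j - tb $ j" unfolding z_def th_def ..
    show "z j + (\<Sum>i<n. \<psi> i j * (\<Sum>k<NN. \<psi> i k * z k)) = - tb $ j + (\<Sum>i<n. \<psi> i j * r i)"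
      unfolding o1 o2 zj using e1 by linarith
  qed
  have R: "(\<Sum>j<NN. (z j)\<^sup>2) + (\<Sum>i<n. (\<Sum>k<NN. \<psi> i k * z k)\<^sup>2) \<le> (\<Sum>j<NN. (tb $ j)\<^sup>2) + (\<Sum>i<n. (r i)\<^sup>2)"
    by (rule ridge[OF eq])
  have sym: "\<forall>j<NN. \<forall>k<NN. A $$ (j,k) = A $$ (k,j)" using Aij unfolding Q_def by (simp add: mult.commute)
  have "Min {k. eigenvalue A k} * (\<Sum>i<NN. (z i)\<^sup>2) \<le> qf (\<lambda>j k. A $$ (j,k)) NN z"
    by (rule lam_min_bound[OF Ac _ sym]) (use N NN_def in simp)
  also have "qf (\<lambda>j k. A $$ (j,k)) NN z = qf Q NN z" unfolding qf_def by (intro sum.cong refl) (simp add: Aij)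
  also have "\<dots> = (\<Sum>j<NN. (z j)\<^sup>2) + (\<Sum>i<n. (\<Sum>k<NN. \<psi> i k * z k)\<^sup>2)" unfolding Q_def by (rule qf_gram)
  finally have L: "Min {k. eigenvalue A k} * (\<Sum>i<NN. (z i)\<^sup>2) \<le> (\<Sum>j<NN. (tb $ j)\<^sup>2) + (\<Sum>i<n. (r i)\<^sup>2)"
    using R by linarith
  have "lam_min s u p q (n - 1) = Min {k. eigenvalue A k}" unfolding lam_min_def A_def using n by simp
  then show ?thesis using L unfolding z_def r_def \<psi>_def NN_def by simp
qed

lemma quant_err:
  assumes "\<epsilon> > 0"
  shows "\<bar>quant \<epsilon> x - x\<bar> \<le> \<epsilon> / 2"
proof -
  have f1: "of_int \<lfloor>x / \<epsilon> + 1/2\<rfloor> \<le> x / \<epsilon> + 1/2" by (rule of_int_floor_le)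
  have f2: "x / \<epsilon> + 1/2 < of_int \<lfloor>x / \<epsilon> + 1/2\<rfloor> + 1" by (rule real_of_int_floor_add_one_gt)
  define F where "F = (of_int \<lfloor>x / \<epsilon> + 1/2\<rfloor> :: real)"
  have e: "\<epsilon> * (x / \<epsilon> + 1/2) = x + \<epsilon> / 2" using assms by (simp add: field_simps)
  have "\<epsilon> * F \<le> \<epsilon> * (x / \<epsilon> + 1/2)" using f1 assms unfolding F_def by (intro mult_left_mono) auto
  moreover have "\<epsilon> * (x / \<epsilon> + 1/2) < \<epsilon> * (F + 1)" using f2 assms unfolding F_def by (intro mult_strict_left_mono) auto
  ultimately have "\<epsilon> * F \<le> x + \<epsilon> / 2" "x + \<epsilon> / 2 < \<epsilon> * F + \<epsilon>" unfolding e by (auto simp: distrib_left)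
  then show ?thesis unfolding quant_def F_def[symmetric] by (simp only: abs_le_iff) linarith
qed

lemma sum_split_add: fixes n :: nat and f :: "nat \<Rightarrow> 'a::comm_monoid_add" shows "(\<Sum>k<m+n. f k) = (\<Sum>k<m. f k) + (\<Sum>k<n. f (m + k))"
  by (induct n) (simp_all add: add.assoc)

lemma abs_sum_mult_le:
  fixes f g :: "nat \<Rightarrow> real"
  assumes "\<And>k. k < n \<Longrightarrow> \<bar>f k\<bar> \<le> A" "\<And>k. k < n \<Longrightarrow> \<bar>g k\<bar> \<le> B"
  shows "\<bar>\<Sum>k<n. f k * g k\<bar> \<le> real n * (A * B)"
proof -
  have "\<bar>\<Sum>k<n. f k * g k\<bar> \<le> (\<Sum>k<n. \<bar>f k * g k\<bar>)" by (rule sum_abs)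
  also have "\<dots> \<le> (\<Sum>k<n. A * B)"
  proof (rule sum_mono)
    fix k assume "k \<in> {..<n}"
    then have "\<bar>f k\<bar> \<le> A" "\<bar>g k\<bar> \<le> B" using assms by auto
    then show "\<bar>f k * g k\<bar> \<le> A * B" by (simp add: abs_mult mult_mono')
  qed
  finally show ?thesis by simp
qed

lemma resid_bound:
  fixes a b Y U W :: "nat \<Rightarrow> real" and p0 q0 pstar q i :: nat
  assumes sys: "Y (Suc i) =
        - (\<Sum>j = 1..p0. a j * zneg Y (int i - int j + 1))
        + (\<Sum>j = 1..q0. b j * zneg U (int i - int j + 1)) + W (Suc i)"
    and U: "\<And>k. \<bar>U k\<bar> \<le> \<delta>"
    and ca: "\<And>j. j \<in> {1..p0} \<Longrightarrow> \<bar>a j\<bar> \<le> c"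
    and cb: "\<And>j. j \<in> {1..q0} \<Longrightarrow> \<bar>b j\<bar> \<le> c"
    and eps: "\<epsilon> > 0" and c0: "0 \<le> c" and q: "q \<le> q0" and p0: "p0 \<le> pstar" and i: "p0 \<le> i"
  shows "\<bar>(quant \<epsilon> (Y (i+1)) - (\<Sum>k<pstar+q. psi (\<lambda>k. quant \<epsilon> (Y k)) U pstar q i $ k * theta_bar a b p0 q0 pstar q $ k)) - W (i+1)\<bar>
     \<le> \<epsilon> / 2 * (1 + real p0 * c) + 2 * real q0 * c * \<delta>"
proof -
  define S where "S = (\<lambda>k. quant \<epsilon> (Y k))"
  define f where "f = (\<lambda>k. psi S U pstar q i $ k * theta_bar a b p0 q0 pstar q $ k)"
  define SA where "SA = (\<Sum>k<p0. a (k+1) * S (i - k))"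
  define YA where "YA = (\<Sum>k<p0. a (k+1) * Y (i - k))"
  define UB1 where "UB1 = (\<Sum>k<q0. b (k+1) * zneg U (int i - int k))"
  define UB2 where "UB2 = (\<Sum>k<q. b (k+1) * zle U (int i - int k))"
  have fk1: "f k = zle S (int i - int k) * (if k + 1 \<le> p0 then - a (k+1) else 0)" if "k < pstar" for k
  proof -
    have k: "k < pstar + q" using that by linarith
    have "psi S U pstar q i $ k = zle S (int i - int k)" unfolding psi_def by (subst index_vec[OF k]) (use that in simp)
    moreover have "theta_bar a b p0 q0 pstar q $ k = (if k + 1 \<le> p0 then - a (k+1) else 0)"
      unfolding theta_bar_def by (subst index_vec[OF k]) (use that in simp)
    ultimately show ?thesis unfolding f_def by simp
  qed
  have fk2: "f (pstar + k) = b (k+1) * zle U (int i - int k)" if "k < q" for k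
  proof -
    have k: "pstar + k < pstar + q" using that by linarith
    have "psi S U pstar q i $ (pstar + k) = zle U (int i - int k)" unfolding psi_def by (subst index_vec[OF k]) simp
    moreover have "theta_bar a b p0 q0 pstar q $ (pstar + k) = b (k+1)"
      unfolding theta_bar_def by (subst index_vec[OF k]) (use that q in simp)
    ultimately show ?thesis unfolding f_def by simp
  qed
  have part1: "(\<Sum>k<pstar. f k) = - SA"
  proof -
    have "(\<Sum>k<pstar. f k) = (\<Sum>k<p0 + (pstar - p0). f k)" using p0 by simp
    also have "\<dots> = (\<Sum>k<p0. f k) + (\<Sum>k<pstar - p0. f (p0 + k))" by (rule sum_split_add)
    also have "(\<Sum>k<pstar - p0. f (p0 + k)) = 0" using fk1 by (intro sum.neutral) auto
    also have "(\<Sum>k<p0. f k) = (\<Sum>k<p0. - (a (k+1) * S (i - k)))"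
    proof (intro sum.cong refl)
      fix k assume k: "k \<in> {..<p0}"
      have kk: "k < i" using k i by simp
      have ik: "int i - int k = int (i - k)" using kk by (simp add: of_nat_diff)
      have "zle S (int i - int k) = S (i - k)" unfolding ik zle_def nat_int using kk by simp
      then show "f k = - (a (k+1) * S (i - k))" using fk1[of k] k p0 by simp
    qed
    finally show ?thesis unfolding SA_def by (simp add: sum_negf)
  qed
  have part2: "(\<Sum>k<q. f (pstar + k)) = UB2" unfolding UB2_def using fk2 by simp
  have psitb: "(\<Sum>k<pstar+q. f k) = - SA + UB2" using sum_split_add[of f pstar q] part1 part2 by simp
  have Ysys: "Y (i+1) = - YA + UB1 + W (i+1)"
  proof -
    have "(\<Sum>j = 1..p0. a j * zneg Y (int i - int j + 1)) = (\<Sum>k<p0. a (Suc k) * zneg Y (int i - int (Suc k) + 1))"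
      by (simp add: sum.atLeast1_atMost_eq)
    also have "\<dots> = YA" unfolding YA_def
    proof (intro sum.cong refl)
      fix k assume k: "k \<in> {..<p0}"
      have kk: "k < i" using k i by simp
      have ik: "int i - int (Suc k) + 1 = int (i - k)" using kk by (simp add: of_nat_diff)
      have "zneg Y (int i - int (Suc k) + 1) = Y (i - k)" unfolding ik zneg_def nat_int by simp
      then show "a (Suc k) * zneg Y (int i - int (Suc k) + 1) = a (k+1) * Y (i - k)" by simp
    qed
    finally have 1: "(\<Sum>j = 1..p0. a j * zneg Y (int i - int j + 1)) = YA" .
    have "(\<Sum>j = 1..q0. b j * zneg U (int i - int j + 1)) = (\<Sum>k<q0. b (Suc k) * zneg U (int i - int (Suc k) + 1))"
      by (simp add: sum.atLeast1_atMost_eq)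
    also have "\<dots> = UB1" unfolding UB1_def by (intro sum.cong refl) simp
    finally have 2: "(\<Sum>j = 1..q0. b j * zneg U (int i - int j + 1)) = UB1" .
    show ?thesis using sys 1 2 by simp
  qed
  have SYA: "SA - YA = (\<Sum>k<p0. a (k+1) * (S (i - k) - Y (i - k)))"
    unfolding SA_def YA_def by (simp add: right_diff_distrib sum_subtractf)
  have key: "(S (i+1) - (\<Sum>k<pstar+q. f k)) - W (i+1) = (S (i+1) - Y (i+1)) + (SA - YA) + UB1 - UB2"
    using psitb Ysys by simp
  have b1: "\<bar>S (i+1) - Y (i+1)\<bar> \<le> \<epsilon> / 2" unfolding S_def by (rule quant_err[OF eps])
  have b2: "\<bar>SA - YA\<bar> \<le> real p0 * (c * (\<epsilon> / 2))" unfolding SYA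
  proof (rule abs_sum_mult_le)
    fix k assume "k < p0"
    then show "\<bar>a (k+1)\<bar> \<le> c" using ca by simp
    show "\<bar>S (i - k) - Y (i - k)\<bar> \<le> \<epsilon> / 2" unfolding S_def by (rule quant_err[OF eps])
  qed
  have zU1: "\<bar>zneg U t\<bar> \<le> \<delta>" for t using U[of "nat t"] U[of 0] unfolding zneg_def by auto
  have zU2: "\<bar>zle U t\<bar> \<le> \<delta>" for t using U[of "nat t"] U[of 0] unfolding zle_def by auto
  have b3: "\<bar>UB1\<bar> \<le> real q0 * (c * \<delta>)" unfolding UB1_def
    by (rule abs_sum_mult_le) (auto intro: cb zU1)
  have b4: "\<bar>UB2\<bar> \<le> real q * (c * \<delta>)" unfolding UB2_def
    by (rule abs_sum_mult_le) (use q in \<open>auto intro: cb zU2\<close>)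
  have "real q * (c * \<delta>) \<le> real q0 * (c * \<delta>)"
    using q c0 U[of 0] by (intro mult_right_mono) auto
  then have b4': "\<bar>UB2\<bar> \<le> real q0 * (c * \<delta>)" using b4 by linarith
  have tri: "\<bar>x1 + x2 + x3 - x4\<bar> \<le> \<bar>x1\<bar> + \<bar>x2\<bar> + \<bar>x3\<bar> + \<bar>x4\<bar>" for x1 x2 x3 x4 :: real
    by (smt (verit))
  have rhs: "\<epsilon> / 2 * (1 + real p0 * c) + 2 * real q0 * c * \<delta> = \<epsilon> / 2 + real p0 * (c * (\<epsilon> / 2)) + real q0 * (c * \<delta>) + real q0 * (c * \<delta>)"
    by (simp add: algebra_simps)
  have "\<bar>(S (i+1) - (\<Sum>k<pstar+q. f k)) - W (i+1)\<bar> \<le> \<epsilon> / 2 * (1 + real p0 * c) + 2 * real q0 * c * \<delta>"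
    unfolding key rhs using tri[of "S (i+1) - Y (i+1)" "SA - YA" UB1 UB2] b1 b2 b3 b4' by linarith
  then show ?thesis unfolding S_def f_def by simp
qed

lemma resid_sum_bound:
  fixes r W :: "nat \<Rightarrow> real"
  assumes "\<And>i. p0 \<le> i \<Longrightarrow> \<bar>r i - W i\<bar> \<le> G"
  shows "(\<Sum>i<n. (r i)\<^sup>2) \<le> (\<Sum>i<p0. (r i)\<^sup>2) + 2 * G\<^sup>2 * real n + 2 * (\<Sum>i<n. (W i)\<^sup>2)"
proof -
  have pt: "(r i)\<^sup>2 \<le> (if i < p0 then (r i)\<^sup>2 else 0) + (2 * G\<^sup>2 + 2 * (W i)\<^sup>2)" for i
  proof (cases "i < p0")
    case True then show ?thesis by simp
  next
    case False
    then have h: "\<bar>r i - W i\<bar> \<le> G" using assms by simp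
    have "\<bar>r i - W i\<bar>\<^sup>2 \<le> G\<^sup>2" using power_mono[OF h abs_ge_zero, of 2] by simp
    then have "(r i - W i)\<^sup>2 \<le> G\<^sup>2" by simp
    moreover have "(r i)\<^sup>2 \<le> 2 * (r i - W i)\<^sup>2 + 2 * (W i)\<^sup>2"
    proof -
      have e: "(r i)\<^sup>2 = ((r i - W i) + W i)\<^sup>2" by simp
      show ?thesis unfolding e power2_sum using two_mul_le[of "r i - W i" "W i"] by linarith
    qed
    ultimately show ?thesis using False by simp
  qed
  have "(\<Sum>i<n. (r i)\<^sup>2) \<le> (\<Sum>i<n. (if i < p0 then (r i)\<^sup>2 else 0) + (2 * G\<^sup>2 + 2 * (W i)\<^sup>2))"
    by (rule sum_mono) (rule pt)
  also have "\<dots> = (\<Sum>i<n. (if i < p0 then (r i)\<^sup>2 else 0)) + 2 * G\<^sup>2 * real n + 2 * (\<Sum>i<n. (W i)\<^sup>2)"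
    by (simp add: sum.distrib sum_distrib_left)
  also have "(\<Sum>i<n. (if i < p0 then (r i)\<^sup>2 else 0)) \<le> (\<Sum>i<p0. (r i)\<^sup>2)"
  proof -
    have "(\<Sum>i<n. (if i < p0 then (r i)\<^sup>2 else 0)) \<le> (\<Sum>i<p0+n. (if i < p0 then (r i)\<^sup>2 else 0))"
      by (rule sum_mono2) auto
    also have "\<dots> = (\<Sum>i<p0. (if i < p0 then (r i)\<^sup>2 else 0)) + (\<Sum>k<n. (if p0 + k < p0 then (r (p0 + k))\<^sup>2 else 0))"
      by (rule sum_split_add)
    also have "\<dots> = (\<Sum>i<p0. (r i)\<^sup>2)" by simp
    finally show ?thesis .
  qed
  finally show ?thesis by linarith
qed

lemma vnorm_bound:
  fixes a b :: "nat \<Rightarrow> real" and s U :: "nat \<Rightarrow> real"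
  assumes q: "q \<le> q0" and Z: "(\<Sum>k<pstar+q. (theta s U pstar q n $ k - theta_bar a b p0 q0 pstar q $ k)\<^sup>2) \<le> B"
  shows "vnorm (theta_bar a b p0 q0 pstar q0 - theta_hat s U pstar q0 q n) \<le>
    sqrt (B + (\<Sum>k<pstar+q0. (theta_bar a b p0 q0 pstar q0 $ k)\<^sup>2))"
proof -
  define N where "N = pstar + q"
  define tb0 where "tb0 = theta_bar a b p0 q0 pstar q0"
  define th where "th = theta s U pstar q n"
  define z where "z = (\<lambda>k. th $ k - theta_bar a b p0 q0 pstar q $ k)"
  define v where "v = tb0 - theta_hat s U pstar q0 q n"
  have dv: "dim_vec v = pstar + q0" unfolding v_def theta_hat_def by simp
  have vk: "(v $ k)\<^sup>2 \<le> (if k < N then (z k)\<^sup>2 else 0) + (tb0 $ k)\<^sup>2" if k: "k < pstar + q0" for k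
  proof -
    have v1: "v $ k = tb0 $ k - theta_hat s U pstar q0 q n $ k"
      unfolding v_def using k by (simp add: theta_hat_def)
    have v2: "theta_hat s U pstar q0 q n $ k = (if k < N then th $ k else 0)"
      unfolding theta_hat_def th_def N_def by (subst index_vec[OF k]) simp
    show ?thesis
    proof (cases "k < N")
      case True
      have kN: "k < pstar + q" using True N_def by simp
      have "tb0 $ k = theta_bar a b p0 q0 pstar q $ k"
        unfolding tb0_def theta_bar_def by (simp add: k kN)
      then have "v $ k = - z k" unfolding v1 v2 z_def using True by simp
      then show ?thesis using True by simp
    next
      case False
      then show ?thesis unfolding v1 v2 by simp
    qed
  qed
  have "(\<Sum>k<pstar+q0. (v $ k)\<^sup>2) \<le> (\<Sum>k<pstar+q0. (if k < N then (z k)\<^sup>2 else 0) + (tb0 $ k)\<^sup>2)"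
    by (rule sum_mono) (use vk in auto)
  also have "\<dots> = (\<Sum>k<pstar+q0. (if k < N then (z k)\<^sup>2 else 0)) + (\<Sum>k<pstar+q0. (tb0 $ k)\<^sup>2)"
    by (rule sum.distrib)
  also have "(\<Sum>k<pstar+q0. (if k < N then (z k)\<^sup>2 else 0)) = (\<Sum>k<N. (z k)\<^sup>2)"
  proof -
    have "pstar + q0 = N + (q0 - q)" using q N_def by simp
    then have "(\<Sum>k<pstar+q0. (if k < N then (z k)\<^sup>2 else 0)) = (\<Sum>k<N + (q0 - q). (if k < N then (z k)\<^sup>2 else 0))" by simp
    also have "\<dots> = (\<Sum>k<N. (if k < N then (z k)\<^sup>2 else 0)) + (\<Sum>k<q0 - q. (if N + k < N then (z (N + k))\<^sup>2 else 0))"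
      by (rule sum_split_add)
    also have "\<dots> = (\<Sum>k<N. (z k)\<^sup>2)" by simp
    finally show ?thesis .
  qed
  also have "(\<Sum>k<N. (z k)\<^sup>2) \<le> B" using Z unfolding z_def th_def N_def .
  finally have "(\<Sum>k<pstar+q0. (v $ k)\<^sup>2) \<le> B + (\<Sum>k<pstar+q0. (tb0 $ k)\<^sup>2)" by simp
  then show ?thesis unfolding vnorm_def dv v_def[symmetric] tb0_def[symmetric] by (rule real_sqrt_le_mono)
qed

lemma det_final:
  fixes a b Y U W :: "nat \<Rightarrow> real" and p0 q0 pstar q :: nat
  assumes sys: "\<And>n. Y (Suc n) =
        - (\<Sum>i = 1..p0. a i * zneg Y (int n - int i + 1))
        + (\<Sum>j = 1..q0. b j * zneg U (int n - int j + 1)) + W (Suc n)"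
    and U: "\<And>k. \<bar>U k\<bar> \<le> \<delta>"
    and ca: "\<And>j. j \<in> {1..p0} \<Longrightarrow> \<bar>a j\<bar> \<le> c"
    and cb: "\<And>j. j \<in> {1..q0} \<Longrightarrow> \<bar>b j\<bar> \<le> c"
    and eps: "\<epsilon> > 0" and c0: "0 \<le> c" and q: "q \<le> q0" and p0: "p0 \<le> pstar" and ps: "pstar > 0"
    and c2: "c2 > 0"
    and lam: "\<forall>\<^sub>F n in sequentially. lam_min (\<lambda>k. quant \<epsilon> (Y k)) U pstar q n \<ge> c2 * (real n + 1)"
    and wl: "\<forall>\<^sub>F n in sequentially. (\<Sum>i<n. (W (Suc i))\<^sup>2) \<le> 4 * real n"
  shows "\<forall>\<^sub>F n in sequentially. vnorm (theta_bar a b p0 q0 pstar q0 - theta_hat (\<lambda>k. quant \<epsilon> (Y k)) U pstar q0 q n)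
     \<le> sqrt ((2 * (\<epsilon> / 2 * (1 + real p0 * c) + 2 * real q0 * c * \<delta>)\<^sup>2 + 9) / c2 + (\<Sum>k<pstar+q0. (theta_bar a b p0 q0 pstar q0 $ k)\<^sup>2))"
proof -
  define G where "G = \<epsilon> / 2 * (1 + real p0 * c) + 2 * real q0 * c * \<delta>"
  define s where "s = (\<lambda>k. quant \<epsilon> (Y k))"
  define tb where "tb = theta_bar a b p0 q0 pstar q"
  define r where "r = (\<lambda>i. s (i+1) - (\<Sum>k<pstar+q. psi s U pstar q i $ k * tb $ k))"
  define C0 where "C0 = (\<Sum>i<p0. (r i)\<^sup>2)"
  define Tb where "Tb = (\<Sum>k<pstar+q. (tb $ k)\<^sup>2)"
  define Z where "Z = (\<lambda>n. (\<Sum>k<pstar+q. (theta s U pstar q n $ k - tb $ k)\<^sup>2))"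
  obtain n1 where n1: "\<And>n. n \<ge> n1 \<Longrightarrow> lam_min s U pstar q n \<ge> c2 * (real n + 1)"
    using lam unfolding eventually_sequentially s_def by blast
  obtain n2 where n2: "\<And>n. n \<ge> n2 \<Longrightarrow> (\<Sum>i<n. (W (Suc i))\<^sup>2) \<le> 4 * real n"
    using wl unfolding eventually_sequentially by blast
  have rb: "\<bar>r i - W (Suc i)\<bar> \<le> G" if "p0 \<le> i" for i
    using resid_bound[where Y=Y and U=U and W=W and a=a and b=b and i=i and \<delta>=\<delta> and c=c, OF sys[of i] U ca cb eps c0 q p0 that] unfolding r_def s_def tb_def G_def by simp
  have Zb: "Z n \<le> (2 * G\<^sup>2 + 9) / c2" if n: "n \<ge> n1 + n2 + nat \<lceil>Tb + C0\<rceil> + 1" for n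
  proof -
    have n1': "n - 1 \<ge> n1" using n by simp
    have nge: "n \<ge> 1" using n by simp
    have lm: "lam_min s U pstar q (n - 1) \<ge> c2 * real n"
      using n1[OF n1'] nge by (simp add: of_nat_diff)
    have tbd: "dim_vec tb = pstar + q" unfolding tb_def theta_bar_def by simp
    have ls: "lam_min s U pstar q (n - 1) * Z n \<le> Tb + (\<Sum>i<n. (r i)\<^sup>2)"
      using ls_bound[OF _ tbd nge, of s U] ps unfolding Z_def Tb_def r_def by simp
    have rs: "(\<Sum>i<n. (r i)\<^sup>2) \<le> C0 + 2 * G\<^sup>2 * real n + 2 * (\<Sum>i<n. (W (Suc i))\<^sup>2)"
      unfolding C0_def by (rule resid_sum_bound) (use rb in simp)
    have w4: "(\<Sum>i<n. (W (Suc i))\<^sup>2) \<le> 4 * real n" using n2 n by simp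
    have Z0: "0 \<le> Z n" unfolding Z_def by (simp add: sum_nonneg)
    have "c2 * real n * Z n \<le> lam_min s U pstar q (n - 1) * Z n" using lm Z0 by (rule mult_right_mono)
    also have "\<dots> \<le> Tb + C0 + 2 * G\<^sup>2 * real n + 8 * real n" using ls rs w4 by linarith
    also have "Tb + C0 \<le> real n"
    proof -
      have "Tb + C0 \<le> real (nat \<lceil>Tb + C0\<rceil>)" by linarith
      also have "\<dots> \<le> real n" using n by linarith
      finally show ?thesis .
    qed
    then have "Tb + C0 + 2 * G\<^sup>2 * real n + 8 * real n \<le> (2 * G\<^sup>2 + 9) * real n" by (simp add: algebra_simps)
    finally have "(Z n * c2) * real n \<le> (2 * G\<^sup>2 + 9) * real n" by (simp add: algebra_simps)
    then have "Z n * c2 \<le> 2 * G\<^sup>2 + 9" using nge by (simp add: mult_le_cancel_right)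
    then show ?thesis using c2 by (simp add: pos_le_divide_eq)
  qed
  show ?thesis unfolding eventually_sequentially
  proof (intro exI allI impI)
    fix n assume n: "n \<ge> n1 + n2 + nat \<lceil>Tb + C0\<rceil> + 1"
    have "(\<Sum>k<pstar+q. (theta s U pstar q n $ k - theta_bar a b p0 q0 pstar q $ k)\<^sup>2) \<le> (2 * G\<^sup>2 + 9) / c2"
      using Zb[OF n] unfolding Z_def tb_def .
    from vnorm_bound[OF q this] show "vnorm (theta_bar a b p0 q0 pstar q0 - theta_hat (\<lambda>k. quant \<epsilon> (Y k)) U pstar q0 q n)
     \<le> sqrt ((2 * (\<epsilon> / 2 * (1 + real p0 * c) + 2 * real q0 * c * \<delta>)\<^sup>2 + 9) / c2 + (\<Sum>k<pstar+q0. (theta_bar a b p0 q0 pstar q0 $ k)\<^sup>2))"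
      unfolding s_def G_def .
  qed
qed

theorem lemma6:
  fixes M :: "'w measure"
    and a b :: "nat \<Rightarrow> real"
    and p0 q0 pstar qstar q :: nat
    and \<delta> \<epsilon> c c2 :: real
    and y u w :: "nat \<Rightarrow> 'w \<Rightarrow> real"
  assumes P: "prob_space M"
    \<comment> \<open>(A1) inputs i.i.d. uniform on [-delta, delta]\<close>
    and A1_pos: "\<delta> > 0"
    and A1_indep: "prob_space.indep_vars M (\<lambda>_. borel) u UNIV"
    and A1_distr: "\<And>i. distributed M lborel (u i)
                      (\<lambda>x. ennreal (indicator {-\<delta>..\<delta>} x / (2 * \<delta>)))"
    \<comment> \<open>noise i.i.d. N(0,1)\<close>
    and w_indep: "prob_space.indep_vars M (\<lambda>_. borel) w UNIV"
    and w_distr: "\<And>i. distributed M lborel (w i) (\<lambda>x. ennreal (std_normal_density x))"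
    \<comment> \<open>system equation, n >= 0, with zero values at negative times\<close>
    and sys: "\<And>\<omega> n. y (Suc n) \<omega> =
        - (\<Sum>i = 1..p0. a i * zneg (\<lambda>k. y k \<omega>) (int n - int i + 1))
        + (\<Sum>j = 1..q0. b j * zneg (\<lambda>k. u k \<omega>) (int n - int j + 1))
        + w (Suc n) \<omega>"
    and ap0: "p0 > 0 \<Longrightarrow> a p0 \<noteq> 0"
    and q0_pos: "q0 \<ge> 1"
    and bq0: "b q0 \<noteq> 0"
    \<comment> \<open>(A2) stability\<close>
    and A2: "\<And>z::complex. cmod z \<le> 1 \<Longrightarrow> 1 + (\<Sum>i = 1..p0. complex_of_real (a i) * z ^ i) \<noteq> 0"
    \<comment> \<open>(A3)\<close>
    and A3_c: "c > 0"
    and A3_a: "\<And>i. i \<in> {1..p0} \<Longrightarrow> \<bar>a i\<bar> \<le> c"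
    and A3_b: "\<And>j. j \<in> {1..q0} \<Longrightarrow> \<bar>b j\<bar> \<le> c"
    and A3_eps: "\<epsilon> > 0" "\<epsilon> < 1 / (2 * (1 + real p0 * c))"
    \<comment> \<open>(A4)\<close>
    and A4: "pstar > 0" "qstar > 0" "p0 \<le> pstar" "1 \<le> q0" "q0 \<le> qstar"
    \<comment> \<open>(A6)\<close>
    and A6_c2: "c2 > 0"
    and A6: "\<And>q'. q' \<le> qstar \<Longrightarrow> AE \<omega> in M. \<forall>\<^sub>F n in sequentially.
        lam_min (\<lambda>k. quant \<epsilon> (y k \<omega>)) (\<lambda>k. u k \<omega>) pstar q' n \<ge> c2 * (real n + 1)"
    and q: "q \<le> q0"
  shows "\<exists>\<gamma>'. AE \<omega> in M. \<forall>\<^sub>F n in sequentially.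
      vnorm (theta_bar a b p0 q0 pstar q0
             - theta_hat (\<lambda>k. quant \<epsilon> (y k \<omega>)) (\<lambda>k. u k \<omega>) pstar q0 q n) \<le> \<gamma>'"
proof -
  interpret prob_space M by (rule P)
  have q_le: "q \<le> qstar" using q A4 by linarith
  have AEu: "AE \<omega> in M. \<forall>k. \<bar>u k \<omega>\<bar> \<le> \<delta>" by (rule u_bounded[OF P A1_pos A1_distr])
  have AEw: "AE \<omega> in M. \<forall>\<^sub>F n in sequentially. (\<Sum>i<n. (w (Suc i) \<omega>)\<^sup>2) \<le> 4 * real n"
    by (rule lln_w[OF P w_indep w_distr])
  have AE6: "AE \<omega> in M. \<forall>\<^sub>F n in sequentially.
        lam_min (\<lambda>k. quant \<epsilon> (y k \<omega>)) (\<lambda>k. u k \<omega>) pstar q n \<ge> c2 * (real n + 1)"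
    by (rule A6[OF q_le])
  show ?thesis
  proof (rule exI[of _ "sqrt ((2 * (\<epsilon> / 2 * (1 + real p0 * c) + 2 * real q0 * c * \<delta>)\<^sup>2 + 9) / c2 + (\<Sum>k<pstar+q0. (theta_bar a b p0 q0 pstar q0 $ k)\<^sup>2))"], rule AE_mp[OF AEu], rule AE_mp[OF AEw], rule AE_mp[OF AE6], intro AE_I2 impI)
    fix \<omega>
    assume h6: "\<forall>\<^sub>F n in sequentially. lam_min (\<lambda>k. quant \<epsilon> (y k \<omega>)) (\<lambda>k. u k \<omega>) pstar q n \<ge> c2 * (real n + 1)"
      and hw: "\<forall>\<^sub>F n in sequentially. (\<Sum>i<n. (w (Suc i) \<omega>)\<^sup>2) \<le> 4 * real n"
      and hu: "\<forall>k. \<bar>u k \<omega>\<bar> \<le> \<delta>"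
    show "\<forall>\<^sub>F n in sequentially. vnorm (theta_bar a b p0 q0 pstar q0
             - theta_hat (\<lambda>k. quant \<epsilon> (y k \<omega>)) (\<lambda>k. u k \<omega>) pstar q0 q n) \<le> sqrt ((2 * (\<epsilon> / 2 * (1 + real p0 * c) + 2 * real q0 * c * \<delta>)\<^sup>2 + 9) / c2 + (\<Sum>k<pstar+q0. (theta_bar a b p0 q0 pstar q0 $ k)\<^sup>2))"
      by (rule det_final[where Y="\<lambda>k. y k \<omega>" and U="\<lambda>k. u k \<omega>" and W="\<lambda>k. w k \<omega>"])
         (use sys hu A3_a A3_b A3_eps A3_c q A4 A6_c2 h6 hw in auto)
  qed
qed

end
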